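(* Let $a_1\ge1$ and $n \ge 3$ be integers, and suppose that $p$ is an odd primitive divisor of $\ell_n$ with $(D \mid p) = 1$. Then there exists $\bm{x} \in \mathcal{L}(f)$ such that $\tau(\bm{x}; p) = \rho(\bm{x}; p) = 2n$ and $x_j \not\equiv 0 \pmod p$ for all $j \ge 0$. Moreover, if $n$ is odd, then there exists $\bm{y} \in \mathcal{L}(f)$ such that $\tau(\bm{y}; p) = \rho(\bm{y}; p) = n$ and $y_j \not\equiv 0 \pmod p$ for all $j\ge0$.
   Context: Let $f := X^2 - a_1X - 1$, $D := a_1^2+4$, and $\alpha,\beta$ the roots of $f$ ($\alpha\beta=-1$, $\alpha+\beta=a_1$). $\mathcal{L}(f)$ is the set of integer sequences $\bm{x}=(x_n)_{n\ge0}$ with $x_{n+2} = a_1x_{n+1} + x_n$ for all $n\ge0$. For an integer $m\ge1$, $\tau(\bm{x}; m)$ is the minimal integer $t \ge 1$ with $x_{n+t}\equiv x_n \pmod m$ for all sufficiently large $n$, and $\rho(\bm{x};m) := \#\{x_n \bmod m : n\ge 0\}$. The Lehmer sequence is $\ell_n := \frac{\alpha^n - (-\beta)^n}{\alpha + \beta}$ for odd $n$ and $\ell_n := \frac{\alpha^n - (-\beta)^n}{\alpha^2 - \beta^2}$ for even $n$ (integers). A prime $p$ is a primitive divisor of $\ell_n$ if $p \mid \ell_n$ but $p \nmid (\alpha^2-\beta^2)^2\ell_1\cdots\ell_{n-1}$, where $(\alpha^2-\beta^2)^2 = a_1^2D$. $(D\mid p)$ is the Legendre symbol. *)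

theory Defs
  imports "HOL-Analysis.Analysis" "HOL-Number_Theory.Number_Theory"
begin

text \<open>Roots of f = X^2 - a X - 1, with D = a^2 + 4.\<close>
definition discr :: "int \<Rightarrow> int" where
  "discr a = a^2 + 4"

definition alpha :: "int \<Rightarrow> real" where
  "alpha a = (real_of_int a + sqrt (real_of_int (discr a))) / 2"

definition beta :: "int \<Rightarrow> real" where
  "beta a = (real_of_int a - sqrt (real_of_int (discr a))) / 2"

text \<open>Lehmer sequence (as a real number; it is in fact an integer).\<close>
definition lehmer :: "int \<Rightarrow> nat \<Rightarrow> real" where
  "lehmer a n = (if odd n
      then (alpha a ^ n - (- beta a) ^ n) / (alpha a + beta a)
      else (alpha a ^ n - (- beta a) ^ n) / (alpha a ^ 2 - beta a ^ 2))"

definition rdvd :: "int \<Rightarrow> real \<Rightarrow> bool" where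
  "rdvd p x \<longleftrightarrow> (\<exists>k::int. x = real_of_int p * real_of_int k)"

definition primitive_divisor :: "int \<Rightarrow> int \<Rightarrow> nat \<Rightarrow> bool" where
  "primitive_divisor a p n \<longleftrightarrow>
     rdvd p (lehmer a n) \<and>
     \<not> rdvd p ((alpha a ^ 2 - beta a ^ 2)^2 * (\<Prod>k\<in>{1..<n}. lehmer a k))"

definition Lf :: "int \<Rightarrow> (nat \<Rightarrow> int) set" where
  "Lf a = {x. \<forall>n. x (n + 2) = a * x (n + 1) + x n}"

definition tau :: "(nat \<Rightarrow> int) \<Rightarrow> int \<Rightarrow> nat" where
  "tau x m = (LEAST t. t \<ge> 1 \<and> (\<exists>N. \<forall>n\<ge>N. [x (n + t) = x n] (mod m)))"

definition rho :: "(nat \<Rightarrow> int) \<Rightarrow> int \<Rightarrow> nat" where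
  "rho x m = card ((\<lambda>n. x n mod m) ` UNIV)"

end

theory Submission
  imports Defs
begin


fun LL :: "int \<Rightarrow> nat \<Rightarrow> int" where
  "LL a 0 = 0"
| "LL a (Suc 0) = 1"
| "LL a (Suc (Suc 0)) = 1"
| "LL a (Suc (Suc (Suc 0))) = a^2 + 3"
| "LL a (Suc (Suc (Suc (Suc k)))) = (a^2 + 2) * LL a (Suc (Suc k)) - LL a k"

lemma ab_facts:
  fixes a :: int
  shows "alpha a + beta a = a" "alpha a * beta a = -1"
    "alpha a - beta a = sqrt (real_of_int (discr a))"
    "sqrt (real_of_int (discr a)) ^ 2 = real_of_int (a^2 + 4)"
    "sqrt (real_of_int (discr a)) > 0"
proof -
  have D: "real_of_int (discr a) = real_of_int a ^ 2 + 4" by (simp add: discr_def)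
  have pos: "real_of_int (discr a) \<ge> 0" using D by (smt (verit) zero_le_power2)
  show s2: "sqrt (real_of_int (discr a)) ^ 2 = real_of_int (a^2 + 4)"
    using pos D by simp
  show "alpha a + beta a = a" by (simp add: alpha_def beta_def field_simps)
  show "alpha a - beta a = sqrt (real_of_int (discr a))" by (simp add: alpha_def beta_def field_simps)
  show "sqrt (real_of_int (discr a)) > 0" using D by (smt (verit) real_sqrt_gt_0_iff zero_le_power2)
  have "alpha a * beta a = (real_of_int a ^ 2 - sqrt (real_of_int (discr a)) ^ 2) / 4"
    by (simp add: alpha_def beta_def field_simps power2_eq_square)
  then show "alpha a * beta a = -1" using s2 by simp
qed

lemma lehmer_rec:
  fixes a :: int
  shows "lehmer a (k + 4) = (real_of_int a ^ 2 + 2) * lehmer a (k + 2) - lehmer a k"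
proof -
  define z where "z = alpha a" define w where "w = - beta a"
  have zw: "z * w = 1" using ab_facts(2)[of a] by (simp add: z_def w_def)
  have zw2: "z^2 + w^2 = real_of_int a ^ 2 + 2"
  proof -
    have "z^2 + w^2 = (alpha a + beta a)^2 - 2 * (alpha a * beta a)"
      by (simp add: z_def w_def power2_eq_square algebra_simps)
    then show ?thesis using ab_facts(1,2)[of a] by simp
  qed
  have W: "z^(k+4) - w^(k+4) = (z^2+w^2) * (z^(k+2) - w^(k+2)) - (z*w)^2 * (z^k - w^k)"
    by (simp add: power_add eval_nat_numeral algebra_simps)
  have W2: "z^(k+4) - w^(k+4) = (real_of_int a ^ 2 + 2) * (z^(k+2) - w^(k+2)) - (z^k - w^k)"
    using W zw zw2 by simp
  define d where "d = (if odd k then alpha a + beta a else alpha a ^ 2 - beta a ^ 2)"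
  have L: "lehmer a j = (z^j - w^j) / d" if "odd j = odd k" for j
    using that unfolding lehmer_def d_def z_def w_def by auto
  have "lehmer a (k + 4) = ((real_of_int a ^ 2 + 2) * (z^(k+2) - w^(k+2)) - (z^k - w^k)) / d"
    using L[of "k+4"] W2 by simp
  also have "\<dots> = (real_of_int a ^ 2 + 2) * ((z^(k+2) - w^(k+2)) / d) - (z^k - w^k) / d"
    by (simp only: diff_divide_distrib times_divide_eq_right right_diff_distrib)
  also have "\<dots> = (real_of_int a ^ 2 + 2) * lehmer a (k + 2) - lehmer a k"
    using L[of "k+2"] L[of k] by simp
  finally show ?thesis .
qed

lemma lehmer_base:
  fixes a :: int assumes "a \<ge> 1"
  shows "lehmer a 1 = 1" "lehmer a 2 = 1" "lehmer a 3 = real_of_int a ^ 2 + 3"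
proof -
  have s: "alpha a + beta a = a" and p: "alpha a * beta a = -1"
    and d: "alpha a - beta a = sqrt (real_of_int (discr a))"
    and q: "sqrt (real_of_int (discr a)) > 0" using ab_facts by auto
  have a0: "real_of_int a \<noteq> 0" using assms by simp
  show "lehmer a 1 = 1" using s a0 by (simp add: lehmer_def)
  have "alpha a ^ 2 - beta a ^ 2 = (alpha a + beta a) * (alpha a - beta a)"
    by (simp add: power2_eq_square algebra_simps)
  then have "alpha a ^ 2 - beta a ^ 2 \<noteq> 0" using s d q a0 by simp
  then show "lehmer a 2 = 1" by (simp add: lehmer_def)
  have "alpha a ^ 3 - (- beta a) ^ 3 = (alpha a + beta a) * ((alpha a + beta a)^2 - 3 * (alpha a * beta a))"
    by (simp add: power2_eq_square power3_eq_cube algebra_simps)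
  also have "\<dots> = real_of_int a * (real_of_int a ^ 2 + 3)" using s p by simp
  finally show "lehmer a 3 = real_of_int a ^ 2 + 3" using s a0 by (simp add: lehmer_def)
qed

lemma lehmer_LL:
  fixes a :: int assumes "a \<ge> 1"
  shows "lehmer a k = real_of_int (LL a k)"
  using assms
proof (induction a k rule: LL.induct)
  case (1 a) then show ?case by (simp add: lehmer_def)
next
  case (2 a) then show ?case using lehmer_base(1)[of a] by simp
next
  case (3 a) then show ?case using lehmer_base(2)[of a] by (simp add: numeral_2_eq_2)
next
  case (4 a) then show ?case using lehmer_base(3)[of a] by (simp add: numeral_3_eq_3)
next
  case (5 a k)
  have "lehmer a (k + 4) = (real_of_int a ^ 2 + 2) * lehmer a (k + 2) - lehmer a k"
    by (rule lehmer_rec)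
  then show ?case using 5 by (simp add: eval_nat_numeral)
qed

lemma rdvd_of_int: "rdvd p (real_of_int z) \<longleftrightarrow> p dvd z"
proof
  assume "rdvd p (real_of_int z)"
  then obtain k where "real_of_int z = real_of_int p * real_of_int k" by (auto simp: rdvd_def)
  then have "z = p * k" by (metis of_int_eq_iff of_int_mult)
  then show "p dvd z" by simp
next
  assume "p dvd z" then obtain k where "z = p * k" by auto
  then show "rdvd p (real_of_int z)" by (auto simp: rdvd_def)
qed

lemma prim_cons:
  fixes a p :: int assumes "a \<ge> 1" "primitive_divisor a p n"
  shows "p dvd LL a n" "\<not> p dvd a" "\<not> p dvd discr a" "\<And>k. 1 \<le> k \<Longrightarrow> k < n \<Longrightarrow> \<not> p dvd LL a k"
proof -
  have s: "alpha a + beta a = a" and d: "alpha a - beta a = sqrt (real_of_int (discr a))"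
    and q: "sqrt (real_of_int (discr a)) ^ 2 = real_of_int (a^2+4)" using ab_facts by auto
  have "(alpha a ^ 2 - beta a ^ 2)^2 = ((alpha a + beta a) * (alpha a - beta a))^2"
    by (simp add: power2_eq_square algebra_simps)
  also have "\<dots> = real_of_int (a^2 * discr a)" using s d q by (simp add: power_mult_distrib discr_def)
  finally have e1: "(alpha a ^ 2 - beta a ^ 2)^2 = real_of_int (a^2 * discr a)" .
  have e2: "(\<Prod>k\<in>{1..<n}. lehmer a k) = real_of_int (\<Prod>k\<in>{1..<n}. LL a k)"
    using lehmer_LL[OF assms(1)] by simp
  have H: "p dvd LL a n" "\<not> p dvd (a^2 * discr a * (\<Prod>k\<in>{1..<n}. LL a k))"
    using assms(2) unfolding primitive_divisor_def e1 e2 lehmer_LL[OF assms(1)] of_int_mult[symmetric] rdvd_of_int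
    by auto
  show "p dvd LL a n" by (fact H(1))
  show "\<not> p dvd a" using H(2) by (metis dvd_mult2 power2_eq_square)
  show "\<not> p dvd discr a" using H(2) by (metis dvd_mult dvd_mult2)
  show "\<not> p dvd LL a k" if "1 \<le> k" "k < n" for k
  proof
    assume "p dvd LL a k"
    moreover have "LL a k dvd (\<Prod>k\<in>{1..<n}. LL a k)" using that by (intro dvd_prodI) auto
    ultimately show False using H(2) by (meson dvd_mult dvd_trans)
  qed
qed

definition cc :: "int \<Rightarrow> int \<Rightarrow> nat \<Rightarrow> int" where
  "cc a t k = (if odd k then a else a * (2 * t - a))"

lemma LL_cong:
  fixes a p t :: int assumes "p dvd t^2 - a*t - 1"
  shows "p dvd t^k * cc a t k * LL a k - (t^(2*k) - 1)"
  using assms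
proof (induction a k rule: LL.induct)
  case (1 a) then show ?case by simp
next
  case (2 a)
  have "t^1 * cc a t 1 * LL a 1 - (t^(2*1) - 1) = -(t^2 - a*t - 1)"
    by (simp add: cc_def power2_eq_square algebra_simps)
  then show ?case using 2 by (metis One_nat_def dvd_minus_iff)
next
  case (3 a)
  have "t^2 * cc a t 2 * LL a 2 - (t^(2*2) - 1) = -((t^2 - a*t - 1) * (t^2 - a*t + 1))"
    by (simp add: cc_def power2_eq_square eval_nat_numeral algebra_simps)
  then show ?case using 3 by (metis numeral_2_eq_2 dvd_minus_iff dvd_mult2)
next
  case (4 a)
  have c3: "cc a t 3 = a" by (simp add: cc_def)
  have "t^3 * cc a t 3 * LL a 3 - (t^(2*3) - 1) = -((t^2 - a*t - 1) * (t^4 + a*t^3 + (1+a^2)*t^2 - a*t + 1))"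
    unfolding c3 by (simp add: power2_eq_square eval_nat_numeral algebra_simps)
  then show ?case using 4 by (metis numeral_3_eq_3 dvd_minus_iff dvd_mult2)
next
  case (5 a k)
  define E where "E j = t^j * cc a t j * LL a j - (t^(2*j) - 1)" for j
  have c: "cc a t (k+4) = cc a t k" "cc a t (k+2) = cc a t k" by (auto simp: cc_def)
  have r: "LL a (k+4) = (a^2 + 2) * LL a (k+2) - LL a k" by (simp add: eval_nat_numeral)
  have "E (k+4) = (a^2+2) * t^2 * E (k+2) - t^4 * E k + (1 - t^(2*k+4)) * (t^2 - a*t - 1) * (t^2 + a*t - 1)"
    unfolding E_def c r by (simp add: power_add power_mult eval_nat_numeral algebra_simps)
  moreover have "p dvd E (k+2)" "p dvd E k" using 5 by (auto simp: E_def eval_nat_numeral)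
  ultimately have "p dvd E (k+4)" using 5(3) by (simp add: dvd_add dvd_diff)
  then show ?case by (simp add: E_def eval_nat_numeral)
qed




lemma not_dvd_2: fixes p :: int assumes "prime p" "odd p" shows "\<not> p dvd 2"
proof
  assume "p dvd 2"
  then have "p \<le> 2" by (simp add: zdvd_imp_le)
  moreover have "p \<ge> 2" using assms(1) prime_ge_2_int by blast
  ultimately have "p = 2" by simp
  then show False using assms(2) by simp
qed

lemma root_facts:
  fixes a p t :: int
  assumes "prime p" "p dvd t^2 - a*t - 1" "\<not> p dvd discr a"
  shows "\<not> p dvd t" "\<not> p dvd (2*t - a)"
proof -
  show "\<not> p dvd t"
  proof
    assume "p dvd t"
    then have "p dvd t * (t - a)" by simp
    moreover have "t * (t - a) = (t^2 - a*t - 1) + 1" by (simp add: power2_eq_square algebra_simps)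
    ultimately have "p dvd (t^2 - a*t - 1) + 1" by simp
    then have "p dvd 1" using assms(2) dvd_add_right_iff by blast
    then show False using assms(1) by (meson not_prime_unit)
  qed
  show "\<not> p dvd (2*t - a)"
  proof
    assume "p dvd (2*t - a)"
    then have "p dvd (2*t-a)*(2*t-a)" by simp
    moreover have "(2*t-a)*(2*t-a) = 4*(t^2 - a*t - 1) + discr a" by (simp add: discr_def power2_eq_square algebra_simps)
    ultimately have "p dvd 4*(t^2 - a*t - 1) + discr a" by simp
    moreover have "p dvd 4*(t^2 - a*t - 1)" using assms(2) by (rule dvd_mult)
    ultimately have "p dvd discr a" using dvd_add_right_iff by blast
    then show False using assms(3) by simp
  qed
qed

lemma root_pow:
  fixes a p t :: int
  assumes "prime p" "p dvd t^2 - a*t - 1" "p dvd LL a n" "\<not> p dvd a" "\<not> p dvd discr a"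
    "\<And>k. 1 \<le> k \<Longrightarrow> k < n \<Longrightarrow> \<not> p dvd LL a k"
  shows "p dvd t^(2*n) - 1" "\<And>k. 0 < k \<Longrightarrow> k < n \<Longrightarrow> \<not> p dvd t^(2*k) - 1"
proof -
  have E: "p dvd t^k * cc a t k * LL a k - (t^(2*k) - 1)" for k using LL_cong[OF assms(2)] .
  have "p dvd t^n * cc a t n * LL a n" using assms(3) by simp
  moreover have "t^(2*n) - 1 = t^n * cc a t n * LL a n - (t^n * cc a t n * LL a n - (t^(2*n) - 1))" by simp
  ultimately show "p dvd t^(2*n) - 1" using E[of n] by (metis dvd_diff)
  show "\<not> p dvd t^(2*k) - 1" if "0 < k" "k < n" for k
  proof
    assume "p dvd t^(2*k) - 1"
    moreover have "t^k * cc a t k * LL a k = (t^k * cc a t k * LL a k - (t^(2*k) - 1)) + (t^(2*k) - 1)" by simp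
    ultimately have "p dvd t^k * cc a t k * LL a k" using E[of k] by (metis dvd_add)
    moreover have "\<not> p dvd t^k" using root_facts[OF assms(1,2,5)] assms(1) prime_dvd_power by blast
    moreover have "\<not> p dvd cc a t k" using root_facts[OF assms(1,2,5)] assms(1,4)
      by (auto simp: cc_def prime_dvd_mult_iff)
    ultimately have "p dvd LL a k" using assms(1) by (simp add: prime_dvd_mult_iff)
    then show False using assms(6)[of k] that by simp
  qed
qed

definition per :: "int \<Rightarrow> int \<Rightarrow> nat \<Rightarrow> bool" where
  "per p t m \<longleftrightarrow> m > 0 \<and> p dvd t^m - 1 \<and> (\<forall>k. 0 < k \<and> k < m \<longrightarrow> \<not> p dvd t^k - 1)"

lemma per_plus:
  fixes p t :: int
  assumes "n > 0" "p dvd t^n - 1" "\<And>k. 0 < k \<Longrightarrow> k < n \<Longrightarrow> \<not> p dvd t^(2*k) - 1"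
  shows "per p t n"
  unfolding per_def
proof (intro conjI allI impI)
  fix k assume k: "0 < k \<and> k < n"
  show "\<not> p dvd t^k - 1"
  proof
    assume "p dvd t^k - 1"
    then have "p dvd (t^k - 1) * (t^k + 1)" by simp
    also have "(t^k - 1) * (t^k + 1) = t^(2*k) - 1" by (simp add: power_mult power2_eq_square algebra_simps)
    finally show False using assms(3) k by blast
  qed
qed (use assms in auto)

lemma per_minus:
  fixes p t :: int
  assumes "prime p" "odd p" "n > 0" "p dvd t^n + 1" "\<And>k. 0 < k \<Longrightarrow> k < n \<Longrightarrow> \<not> p dvd t^(2*k) - 1"
  shows "per p t (2*n)"
  unfolding per_def
proof (intro conjI allI impI)
  show "2*n > 0" using assms by simp
  have "t^(2*n) - 1 = (t^n + 1) * (t^n - 1)" by (simp add: power_mult power2_eq_square algebra_simps)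
  then show "p dvd t^(2*n) - 1" using assms(4) by simp
  fix k assume k: "0 < k \<and> k < 2*n"
  show "\<not> p dvd t^k - 1"
  proof
    assume h: "p dvd t^k - 1"
    consider "k < n" | "k = n" | "n < k" by linarith
    then show False
    proof cases
      case 1
      have "p dvd (t^k - 1) * (t^k + 1)" using h by simp
      also have "(t^k - 1) * (t^k + 1) = t^(2*k) - 1" by (simp add: power_mult power2_eq_square algebra_simps)
      finally show False using assms(5) k 1 by blast
    next
      case 2
      have "p dvd (t^n + 1) - (t^n - 1)" using h 2 assms(4) by (metis dvd_diff)
      moreover have "(t^n + 1) - (t^n - 1) = (2::int)" by simp
      ultimately show False using not_dvd_2[OF assms(1,2)] by simp
    next
      case 3
      define j where "j = k - n"
      have j: "0 < j" "j < n" "k = n + j" using 3 k by (auto simp: j_def)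
      have "t^k - 1 = t^j * (t^n + 1) - (t^j + 1)" by (simp add: j(3) power_add algebra_simps)
      then have "t^j + 1 = t^j * (t^n + 1) - (t^k - 1)" by simp
      moreover have "p dvd t^j * (t^n + 1)" using assms(4) by simp
      ultimately have "p dvd t^j + 1" using h by (metis dvd_diff)
      then have "p dvd (t^j - 1) * (t^j + 1)" by simp
      also have "(t^j - 1) * (t^j + 1) = t^(2*j) - 1" by (simp add: power_mult power2_eq_square algebra_simps)
      finally show False using assms(5) j by blast
    qed
  qed
qed



lemma per_mod:
  fixes p t :: int assumes "per p t m"
  shows "[t^j = t^(j mod m)] (mod p)"
proof -
  have "[t^m = 1] (mod p)" using assms by (simp add: per_def cong_iff_dvd_diff)
  then have "[(t^m)^(j div m) = 1^(j div m)] (mod p)" by (rule cong_pow)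
  then have "[(t^m)^(j div m) * t^(j mod m) = 1^(j div m) * t^(j mod m)] (mod p)"
    by (rule cong_mult) (rule cong_refl)
  moreover have "t^j = (t^m)^(j div m) * t^(j mod m)"
  proof -
    have "t^j = t^(m * (j div m) + j mod m)" by simp
    then show ?thesis by (simp only: power_add power_mult)
  qed
  ultimately show ?thesis by simp
qed

lemma per_dvd:
  fixes p t :: int assumes "per p t m"
  shows "p dvd t^s - 1 \<longleftrightarrow> m dvd s"
proof
  assume h: "p dvd t^s - 1"
  have "[t^(s mod m) = t^s] (mod p)" using per_mod[OF assms] by (simp add: cong_sym)
  moreover have "[t^s = 1] (mod p)" using h by (simp add: cong_iff_dvd_diff)
  ultimately have "[t^(s mod m) = 1] (mod p)" by (rule cong_trans)
  then have "p dvd t^(s mod m) - 1" by (simp add: cong_iff_dvd_diff)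
  moreover have "s mod m < m" using assms by (simp add: per_def)
  ultimately have "s mod m = 0" using assms unfolding per_def by auto
  then show "m dvd s" by auto
next
  assume "m dvd s"
  then have "[t^s = t^0] (mod p)" using per_mod[OF assms, of s] by simp
  then show "p dvd t^s - 1" by (simp add: cong_iff_dvd_diff)
qed

lemma cancel_pow:
  fixes p t :: int assumes "prime p" "\<not> p dvd t" "[t^i * u = t^i * v] (mod p)"
  shows "[u = v] (mod p)"
proof -
  have "p dvd t^i * (u - v)" using assms(3) by (simp add: cong_iff_dvd_diff right_diff_distrib)
  moreover have "\<not> p dvd t^i" using assms(1,2) prime_dvd_power by blast
  ultimately have "p dvd u - v" using assms(1) by (simp add: prime_dvd_mult_iff)
  then show ?thesis by (simp add: cong_iff_dvd_diff)
qed

fun XS :: "int \<Rightarrow> int \<Rightarrow> nat \<Rightarrow> int" where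
  "XS a t 0 = 1"
| "XS a t (Suc 0) = t"
| "XS a t (Suc (Suc j)) = a * XS a t (Suc j) + XS a t j"

lemma XS_Lf: "XS a t \<in> Lf a"
  by (simp add: Lf_def)

lemma XS_cong:
  fixes p :: int assumes "p dvd t^2 - a*t - 1"
  shows "[XS a t j = t^j] (mod p)"
  using assms
proof (induction a t j rule: XS.induct)
  case (3 a t j)
  have h1: "p dvd XS a t (Suc j) - t^(Suc j)" and h2: "p dvd XS a t j - t^j"
    using 3 by (auto simp: cong_iff_dvd_diff)
  have e: "XS a t (Suc (Suc j)) - t^(Suc (Suc j)) =
     a * (XS a t (Suc j) - t^(Suc j)) + (XS a t j - t^j) - t^j * (t^2 - a*t - 1)"
    by (simp add: power2_eq_square algebra_simps)
  have "p dvd a * (XS a t (Suc j) - t^(Suc j)) + (XS a t j - t^j) - t^j * (t^2 - a*t - 1)"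
    by (rule dvd_diff[OF dvd_add[OF dvd_mult[OF h1] h2] dvd_mult[OF 3(3)]])
  then show ?case unfolding cong_iff_dvd_diff e .
qed auto



lemma build:
  fixes a p t :: int
  assumes p: "prime p" and r: "p dvd t^2 - a*t - 1" and nt: "\<not> p dvd t" and per: "per p t m"
  shows "\<exists>x\<in>Lf a. tau x p = m \<and> rho x p = m \<and> (\<forall>j. \<not> p dvd x j)"
proof (intro bexI conjI allI)
  define x where "x = XS a t"
  have xc: "[x j = t^j] (mod p)" for j unfolding x_def by (rule XS_cong[OF r])
  have m0: "m > 0" using per by (simp add: per_def)
  have tm: "[t^m = 1] (mod p)" using per by (simp add: per_def cong_iff_dvd_diff)
  show "XS a t \<in> Lf a" by (rule XS_Lf)
  show "\<not> p dvd XS a t j" for j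
  proof
    assume "p dvd XS a t j"
    then have "[x j = 0] (mod p)" by (simp add: x_def cong_0_iff)
    then have "[t^j = 0] (mod p)" using xc[of j] by (meson cong_sym cong_trans)
    then have "p dvd t^j" by (simp add: cong_0_iff)
    then show False using p nt prime_dvd_power by blast
  qed
  have shift: "[x (j + m) = x j] (mod p)" for j
  proof -
    have "[x (j+m) = t^j * t^m] (mod p)" using xc[of "j+m"] by (simp add: power_add)
    moreover have "[t^j * t^m = t^j * 1] (mod p)" by (rule cong_mult[OF cong_refl tm])
    ultimately have "[x (j+m) = t^j] (mod p)" by (simp add: cong_trans)
    then show ?thesis using xc[of j] by (meson cong_sym cong_trans)
  qed
  show "tau (XS a t) p = m"
    unfolding tau_def x_def[symmetric]
  proof (rule Least_equality)
    show "1 \<le> m \<and> (\<exists>N. \<forall>n\<ge>N. [x (n + m) = x n] (mod p))" using m0 shift by auto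
  next
    fix y assume "1 \<le> y \<and> (\<exists>N. \<forall>n\<ge>N. [x (n + y) = x n] (mod p))"
    then obtain N where y1: "1 \<le> y" and N: "[x (N + y) = x N] (mod p)" by auto
    have "[t^(N+y) = t^N] (mod p)" using N xc[of "N+y"] xc[of N] by (meson cong_sym cong_trans)
    then have "[t^N * t^y = t^N * 1] (mod p)" by (simp add: power_add)
    then have "[t^y = 1] (mod p)" by (rule cancel_pow[OF p nt])
    then have "m dvd y" using per_dvd[OF per] by (simp add: cong_iff_dvd_diff)
    then show "m \<le> y" using y1 by (simp add: dvd_imp_le)
  qed
  have img: "(\<lambda>n. x n mod p) ` UNIV = (\<lambda>n. t^n mod p) ` {..<m}"
  proof -
    have "x n mod p = t^(n mod m) mod p" for n
      using xc[of n] per_mod[OF per, of n] unfolding cong_def by simp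
    moreover have "n mod m < m" for n using m0 by simp
    ultimately show ?thesis
      by (auto simp: image_iff) (metis mod_less)
  qed
  have inj: "inj_on (\<lambda>n. t^n mod p) {..<m}"
  proof -
    have key: "i = j" if "i \<le> j" "j < m" "t^i mod p = t^j mod p" for i j
    proof (rule ccontr)
      assume "i \<noteq> j"
      then have ij: "0 < j - i" "j - i < m" using that by auto
      have "[t^i * t^(j-i) = t^i * 1] (mod p)"
        using that(3) unfolding cong_def by (simp add: power_add[symmetric] that(1))
      then have "[t^(j-i) = 1] (mod p)" by (rule cancel_pow[OF p nt])
      then have "m dvd j - i" using per_dvd[OF per] by (simp add: cong_iff_dvd_diff)
      then show False using ij by (simp add: dvd_imp_le leD)
    qed
    show ?thesis unfolding inj_on_def
      by (metis key lessThan_iff nat_le_linear)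
  qed
  show "rho (XS a t) p = m"
    unfolding rho_def x_def[symmetric] img using card_image[OF inj] by simp
qed



lemma root_exists:
  fixes a p :: int
  assumes p: "prime p" "odd p" and L: "Legendre (discr a) p = 1"
  shows "\<exists>r. p dvd r^2 - a*r - 1"
proof -
  have "QuadRes p (discr a)" using L by (auto simp: Legendre_def split: if_splits)
  then obtain y where y: "[y^2 = discr a] (mod p)" by (auto simp: QuadRes_def)
  define y' where "y' = (if even (a + y) then y else y + p)"
  have ev: "even (a + y')" using p(2) by (auto simp: y'_def)
  have "[y' = y] (mod p)" by (auto simp: y'_def cong_iff_dvd_diff)
  then have "[y'^2 = y^2] (mod p)" by (rule cong_pow)
  then have "[y'^2 = discr a] (mod p)" using y by (rule cong_trans)
  then have d: "p dvd y'^2 - discr a" by (simp add: cong_iff_dvd_diff)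
  obtain r where r: "a + y' = 2 * r" using ev by blast
  have "y'^2 - discr a = 2 * (2 * (r^2 - a*r - 1))"
  proof -
    have yy: "y' = 2*r - a" using r by simp
    show ?thesis unfolding yy by (simp add: discr_def power2_eq_square algebra_simps)
  qed
  then have "p dvd 2 * (2 * (r^2 - a*r - 1))" using d by simp
  then have "p dvd 2 \<or> p dvd 2 * (r^2 - a*r - 1)" by (rule prime_dvd_multD[OF p(1)])
  then have "p dvd 2 * (r^2 - a*r - 1)" using not_dvd_2[OF p] by blast
  then have "p dvd 2 \<or> p dvd r^2 - a*r - 1" by (rule prime_dvd_multD[OF p(1)])
  then have "p dvd r^2 - a*r - 1" using not_dvd_2[OF p] by blast
  then show ?thesis by blast
qed

lemma dich:
  fixes p t :: int assumes "prime p" "p dvd t^(2*n) - 1"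
  shows "p dvd t^n - 1 \<or> p dvd t^n + 1"
proof -
  have "t^(2*n) - 1 = (t^n - 1) * (t^n + 1)" by (simp add: power_mult power2_eq_square algebra_simps)
  then show ?thesis using assms by (simp add: prime_dvd_mult_iff)
qed

theorem mainTheorem11:
  fixes a p :: int and n :: nat
  assumes "a \<ge> 1" and "n \<ge> 3"
    and "prime p" and "odd p"
    and "primitive_divisor a p n"
    and "Legendre (discr a) p = 1"
  shows "(\<exists>x\<in>Lf a. tau x p = 2 * n \<and> rho x p = 2 * n \<and> (\<forall>j. \<not> p dvd x j))
       \<and> (odd n \<longrightarrow> (\<exists>y\<in>Lf a. tau y p = n \<and> rho y p = n \<and> (\<forall>j. \<not> p dvd y j)))"
proof -
  note pc = prim_cons[OF assms(1,5)]
  obtain r where r: "p dvd r^2 - a*r - 1" using root_exists[OF assms(3,4,6)] by blast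
  define r' where "r' = a - r"
  have r': "p dvd r'^2 - a*r' - 1"
  proof -
    have "r'^2 - a*r' - 1 = r^2 - a*r - 1" by (simp add: r'_def power2_eq_square algebra_simps)
    then show ?thesis using r by simp
  qed
  have n0: "n > 0" using assms(2) by simp
  have RP: "p dvd t^(2*n) - 1" "\<And>k. 0 < k \<Longrightarrow> k < n \<Longrightarrow> \<not> p dvd t^(2*k) - 1"
    if "p dvd t^2 - a*t - 1" for t
    using root_pow[OF assms(3) that pc(1,2,3)] pc(4) by blast+
  have B: "\<exists>x\<in>Lf a. tau x p = m \<and> rho x p = m \<and> (\<forall>j. \<not> p dvd x j)"
    if "p dvd t^2 - a*t - 1" "per p t m" for t m
    using build[OF assms(3) that(1) root_facts(1)[OF assms(3) that(1) pc(3)] that(2)] .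
  have plus: "per p t n" if "p dvd t^2 - a*t - 1" "p dvd t^n - 1" for t
    using per_plus[OF n0 that(2) RP(2)[OF that(1)]] .
  have minus: "per p t (2*n)" if "p dvd t^2 - a*t - 1" "p dvd t^n + 1" for t
    using per_minus[OF assms(3,4) n0 that(2) RP(2)[OF that(1)]] .
  show ?thesis
  proof (cases "even n")
    case True
    then obtain k where k: "n = 2*k" by blast
    have "\<not> p dvd r^n - 1" using RP(2)[OF r, of k] k n0 by simp
    then have "p dvd r^n + 1" using dich[OF assms(3) RP(1)[OF r]] by blast
    then show ?thesis using B[OF r minus[OF r]] True by blast
  next
    case False
    have rr: "[r * r' = -1] (mod p)"
    proof -
      have "r * r' - (-1) = - (r^2 - a*r - 1)" by (simp add: r'_def power2_eq_square algebra_simps)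
      then show ?thesis unfolding cong_iff_dvd_diff using r by (simp only: dvd_minus_iff)
    qed
    have "[(r * r')^n = (-1)^n] (mod p)" using rr by (rule cong_pow)
    then have rrn: "[r^n * r'^n = -1] (mod p)" using False by (simp add: power_mult_distrib)
    have n2: "\<not> [1 = -1] (mod p)"
      using not_dvd_2[OF assms(3,4)] by (simp add: cong_iff_dvd_diff)
    have "(p dvd r^n - 1 \<and> p dvd r'^n + 1) \<or> (p dvd r^n + 1 \<and> p dvd r'^n - 1)"
    proof -
      have d1: "p dvd r^n - 1 \<or> p dvd r^n + 1" using dich[OF assms(3) RP(1)[OF r]] .
      have d2: "p dvd r'^n - 1 \<or> p dvd r'^n + 1" using dich[OF assms(3) RP(1)[OF r']] .
      have c1: "[u = 1] (mod p)" if "p dvd u - 1" for u :: int using that by (simp add: cong_iff_dvd_diff)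
      have c2: "[u = -1] (mod p)" if "p dvd u + 1" for u :: int using that by (simp add: cong_iff_dvd_diff)
      have no1: False if "p dvd r^n - 1" "p dvd r'^n - 1"
      proof -
        have "[r^n * r'^n = 1 * 1] (mod p)" using cong_mult[OF c1[OF that(1)] c1[OF that(2)]] .
        then have "[r^n * r'^n = 1] (mod p)" by simp
        then have "[-1 = 1] (mod p)" by (rule cong_trans[OF cong_sym[OF rrn]])
        then have "[1 = -1] (mod p)" by (rule cong_sym)
        then show False using n2 by simp
      qed
      have no2: False if "p dvd r^n + 1" "p dvd r'^n + 1"
      proof -
        have "[r^n * r'^n = (-1) * (-1)] (mod p)" using cong_mult[OF c2[OF that(1)] c2[OF that(2)]] .
        then have "[r^n * r'^n = 1] (mod p)" by simp
        then have "[-1 = 1] (mod p)" by (rule cong_trans[OF cong_sym[OF rrn]])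
        then have "[1 = -1] (mod p)" by (rule cong_sym)
        then show False using n2 by simp
      qed
      show ?thesis using d1 d2 no1 no2 by blast
    qed
    then show ?thesis
    proof
      assume h: "p dvd r^n - 1 \<and> p dvd r'^n + 1"
      show ?thesis using B[OF r plus[OF r]] B[OF r' minus[OF r']] h by blast
    next
      assume h: "p dvd r^n + 1 \<and> p dvd r'^n - 1"
      show ?thesis using B[OF r minus[OF r]] B[OF r' plus[OF r']] h by blast
    qed
  qed
qed

end
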